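(* Let $r\ge0$, $\eta\in\mathbb{R}^d$, $l\in\mathbb{R}$, and let $M_{e^{iy\cdot\eta+i\omega l}}$ denote the operator of multiplication of a function $u(y,\omega)$ on $\mathbb{R}^d\times\mathbb{R}$ by $e^{iy\cdot\eta+i\omega l}$. Then, with an implicit constant independent of $\varepsilon\in(0,1]$, $\gamma\ge1$, $\eta$, $l$, $$\|\Lambda^r_DM_{e^{iy\cdot\eta+i\omega l}}u\|_0\lesssim\|\Lambda^r_Du\|_0+\langle\eta\rangle^r\|u\|_0+\Big\langle\frac{l}{\varepsilon}\Big\rangle^r\|u\|_0 .$$
   Context: Fix $\beta\in\mathbb{R}^d\setminus\{0\}$, $\varepsilon\in(0,1]$, $\gamma\ge1$. With Fourier variables $(\xi,k)$ dual to $(y,\omega)$, $X=\xi+k\beta/\varepsilon$ and $\Lambda^r_D$ is the Fourier multiplier with symbol $(|X|^2+\gamma^2)^{r/2}$. $\|\cdot\|_0$ is the $L^2(\mathbb{R}^{d+1})$ norm, and $\langle a\rangle=(1+|a|^2)^{1/2}$. *)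

theory Defs
  imports "HOL-Analysis.Analysis"
begin

text \<open>Functions u(y,omega) on R^d x R are modelled as maps 'a \<times> real \<Rightarrow> complex,
  with 'a a Euclidean space of dimension d = DIM('a).\<close>

definition fourier :: "('a::euclidean_space \<times> real \<Rightarrow> complex) \<Rightarrow> 'a \<times> real \<Rightarrow> complex" where
  "fourier u = (\<lambda>(\<xi>, k). integral\<^sup>L lborel
      (\<lambda>(y, \<omega>). cis (- (y \<bullet> \<xi> + \<omega> * k)) * u (y, \<omega>)))"

text \<open>Symbol of Lambda^r_D: (|X|^2 + gamma^2)^(r/2), X = xi + k beta / eps.\<close>
definition lam_symbol :: "'a::euclidean_space \<Rightarrow> real \<Rightarrow> real \<Rightarrow> real \<Rightarrow> 'a \<times> real \<Rightarrow> real" where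
  "lam_symbol \<beta> \<epsilon> \<gamma> r = (\<lambda>(\<xi>, k). ((norm (\<xi> + (k / \<epsilon>) *\<^sub>R \<beta>))\<^sup>2 + \<gamma>\<^sup>2) powr (r / 2))"

definition lam_integrand :: "'a::euclidean_space \<Rightarrow> real \<Rightarrow> real \<Rightarrow> real \<Rightarrow> ('a \<times> real \<Rightarrow> complex) \<Rightarrow> 'a \<times> real \<Rightarrow> real" where
  "lam_integrand \<beta> \<epsilon> \<gamma> r u = (\<lambda>z. (lam_symbol \<beta> \<epsilon> \<gamma> r z * cmod (fourier u z))\<^sup>2)"

text \<open>||Lambda^r_D u||_0, via Plancherel: (2 pi)^(-(d+1)/2) || symbol * fourier u ||_{L2}.\<close>
definition lam_norm :: "'a::euclidean_space \<Rightarrow> real \<Rightarrow> real \<Rightarrow> real \<Rightarrow> ('a \<times> real \<Rightarrow> complex) \<Rightarrow> real" where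
  "lam_norm \<beta> \<epsilon> \<gamma> r u = (2 * pi) powr (- (real DIM('a) + 1) / 2)
      * sqrt (integral\<^sup>L lborel (lam_integrand \<beta> \<epsilon> \<gamma> r u))"

definition L2_norm0 :: "('a::euclidean_space \<times> real \<Rightarrow> complex) \<Rightarrow> real" where
  "L2_norm0 u = sqrt (integral\<^sup>L lborel (\<lambda>z. (cmod (u z))\<^sup>2))"

definition mult_exp :: "'a::euclidean_space \<Rightarrow> real \<Rightarrow> ('a \<times> real \<Rightarrow> complex) \<Rightarrow> 'a \<times> real \<Rightarrow> complex" where
  "mult_exp \<eta> l u = (\<lambda>(y, \<omega>). cis (y \<bullet> \<eta> + \<omega> * l) * u (y, \<omega>))"

definition jbr :: "real \<Rightarrow> real" where
  "jbr a = sqrt (1 + a\<^sup>2)"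

end

theory Submission
  imports Defs "HOL-Probability.Characteristic_Functions"
begin

lemma sum_basis_inner: "b \<in> (Basis::'b::euclidean_space set) \<Longrightarrow> (\<Sum>b'\<in>Basis. x b' *\<^sub>R b') \<bullet> b = x b"
  by (simp add: inner_sum_left inner_Basis if_distrib cong: if_cong)

lemma integral_lborel_prod_basis:
  fixes f :: "'b::euclidean_space \<Rightarrow> real \<Rightarrow> complex"
  assumes int: "\<And>b. b \<in> Basis \<Longrightarrow> integrable lborel (f b)"
  shows "(\<integral>x. (\<Prod>b\<in>Basis. f b (x \<bullet> b)) \<partial>(lborel::'b measure)) = (\<Prod>b\<in>Basis. integral\<^sup>L lborel (f b))"
proof -
  interpret P: product_sigma_finite "\<lambda>_::'b. lborel::real measure"
    by (simp add: product_sigma_finite_def sigma_finite_lborel)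
  have meas: "(\<lambda>x. \<Prod>b\<in>Basis. f b (x \<bullet> b)) \<in> borel_measurable (borel::'b measure)"
    using int by (intro borel_measurable_prod) (auto intro: measurable_compose[OF _ borel_measurable_integrable])
  have "(\<integral>x. (\<Prod>b\<in>Basis. f b (x \<bullet> b)) \<partial>(lborel::'b measure))
     = (\<integral>x. (\<Prod>b\<in>Basis. f b ((\<Sum>b'\<in>Basis. x b' *\<^sub>R b') \<bullet> b)) \<partial>(\<Pi>\<^sub>M b\<in>Basis. lborel))"
    by (subst lborel_eq) (rule integral_distr, simp, use meas in simp)
  also have "\<dots> = (\<integral>x. (\<Prod>b\<in>Basis. f b (x b)) \<partial>(\<Pi>\<^sub>M b\<in>Basis. lborel))"
    by (rule Bochner_Integration.integral_cong[OF refl]) (auto intro!: prod.cong simp: sum_basis_inner)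
  also have "\<dots> = (\<Prod>b\<in>Basis. integral\<^sup>L lborel (f b))"
    by (rule P.product_integral_prod) (simp_all add: int)
  finally show ?thesis .
qed


lemma measurable_cis[measurable (raw)]:
  "f \<in> borel_measurable M \<Longrightarrow> (\<lambda>x. cis (f x)) \<in> borel_measurable M"
  by (rule borel_measurable_continuous_on[where f=cis]) (intro continuous_intros)

lemma gauss_ft_std:
  "(\<integral>s. cis (- (t * s)) * complex_of_real (exp (- s\<^sup>2 / 2)) \<partial>lborel) = complex_of_real (sqrt (2*pi) * exp (- t\<^sup>2 / 2))"
proof -
  have "char std_normal_distribution (-t) = complex_of_real (exp (- t\<^sup>2 / 2))"
    by (simp add: char_std_normal_distribution)
  moreover have "char std_normal_distribution (-t) = (\<integral>s. std_normal_density s *\<^sub>R iexp (-t * s) \<partial>lborel)"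
    unfolding char_def by (subst integral_density) (auto simp: normal_density_nonneg)
  moreover have "(\<lambda>s. std_normal_density s *\<^sub>R iexp (-t * s)) = (\<lambda>s. complex_of_real (1 / sqrt (2 * pi)) * (cis (- (t * s)) * complex_of_real (exp (- s\<^sup>2 / 2))))"
    by (auto simp: std_normal_density_def cis_conv_exp scaleR_conv_of_real mult_ac)
  ultimately have "complex_of_real (1 / sqrt (2 * pi)) * (\<integral>s. cis (- (t * s)) * complex_of_real (exp (- s\<^sup>2 / 2)) \<partial>lborel) = complex_of_real (exp (- t\<^sup>2 / 2))"
    by simp
  then show ?thesis
    by (simp add: field_simps)
qed

lemma gauss_integrable: "integrable lborel (\<lambda>s::real. exp (- s\<^sup>2 / 2))"
proof -
  have "integrable lborel (\<lambda>x. std_normal_density x * x ^ 0)"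
    by (rule integrable_std_normal_moment)
  then have "integrable lborel (\<lambda>x. sqrt (2*pi) * (std_normal_density x * x ^ 0))"
    by simp
  then show ?thesis
    by (simp add: std_normal_density_def)
qed

lemma gauss_integrable_scaled: "c \<noteq> 0 \<Longrightarrow> integrable lborel (\<lambda>s::real. exp (- (c * s)\<^sup>2 / 2))"
  using lborel_integrable_real_affine[OF gauss_integrable, of c 0] by simp

lemma gauss_ft_scaled:
  assumes "\<delta> > 0"
  shows "(\<integral>s. cis (- (t * s)) * complex_of_real (exp (- (\<delta> * s)\<^sup>2 / 2)) \<partial>lborel)
        = complex_of_real (sqrt (2*pi) / \<delta> * exp (- (t / \<delta>)\<^sup>2 / 2))"
proof -
  have "(\<integral>s. cis (- (t * s)) * complex_of_real (exp (- (\<delta> * s)\<^sup>2 / 2)) \<partial>lborel)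
     = \<bar>1/\<delta>\<bar> *\<^sub>R (\<integral>x. cis (- (t * (0 + 1/\<delta> * x))) * complex_of_real (exp (- (\<delta> * (0 + 1/\<delta> * x))\<^sup>2 / 2)) \<partial>lborel)"
    using assms by (intro lborel_integral_real_affine) simp
  also have "(\<lambda>x. cis (- (t * (0 + 1/\<delta> * x))) * complex_of_real (exp (- (\<delta> * (0 + 1/\<delta> * x))\<^sup>2 / 2)))
      = (\<lambda>x. cis (- ((t/\<delta>) * x)) * complex_of_real (exp (- x\<^sup>2 / 2)))"
    using assms by (auto simp: field_simps)
  also have "(\<integral>x. cis (- ((t/\<delta>) * x)) * complex_of_real (exp (- x\<^sup>2 / 2)) \<partial>lborel) = complex_of_real (sqrt (2*pi) * exp (- (t/\<delta>)\<^sup>2 / 2))"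
    by (rule gauss_ft_std)
  finally show ?thesis
    using assms by (simp add: scaleR_conv_of_real)
qed

lemma gauss_nn:
  assumes "\<delta> > 0"
  shows "(\<integral>\<^sup>+ s. ennreal (exp (- (s / \<delta>)\<^sup>2 / 2)) \<partial>lborel) = ennreal (sqrt (2*pi) * \<delta>)"
proof -
  have int: "integrable lborel (\<lambda>s. exp (- ((1/\<delta>) * s)\<^sup>2 / 2))"
    using assms by (intro gauss_integrable_scaled) simp
  have "complex_of_real (\<integral>s. exp (- ((1/\<delta>) * s)\<^sup>2 / 2) \<partial>lborel)
       = (\<integral>s. cis (- (0 * s)) * complex_of_real (exp (- ((1/\<delta>) * s)\<^sup>2 / 2)) \<partial>lborel)"
    by simp
  also have "\<dots> = complex_of_real (sqrt (2*pi) * \<delta>)"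
    using assms by (subst gauss_ft_scaled) simp_all
  finally have "(\<integral>s. exp (- ((1/\<delta>) * s)\<^sup>2 / 2) \<partial>lborel) = sqrt (2*pi) * \<delta>"
    using of_real_eq_iff by blast
  then show ?thesis
    using int by (subst nn_integral_eq_integral) simp_all
qed

lemma cis_sum: "cis (sum f A) = (\<Prod>a\<in>A. cis (f a))"
  by (induct A rule: infinite_finite_induct) (auto simp: cis_mult[symmetric])

definition gk :: "real \<Rightarrow> 'b::euclidean_space \<Rightarrow> real" where
  "gk \<delta> \<zeta> = exp (- (\<delta> * norm \<zeta>)\<^sup>2 / 2)"

definition hk :: "real \<Rightarrow> 'b::euclidean_space \<Rightarrow> real" where
  "hk \<delta> z = (\<Prod>b\<in>Basis. sqrt (2*pi) / \<delta> * exp (- ((z \<bullet> b) / \<delta>)\<^sup>2 / 2))"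

lemma gk_prod: "gk \<delta> \<zeta> = (\<Prod>b\<in>Basis. exp (- (\<delta> * (\<zeta> \<bullet> b))\<^sup>2 / 2))"
proof -
  have "(norm \<zeta>)\<^sup>2 = \<zeta> \<bullet> \<zeta>" by (rule power2_norm_eq_inner)
  also have "\<dots> = (\<Sum>b\<in>Basis. (\<zeta> \<bullet> b) * (\<zeta> \<bullet> b))" by (rule euclidean_inner)
  finally have n: "(norm \<zeta>)\<^sup>2 = (\<Sum>b\<in>Basis. (\<zeta> \<bullet> b)\<^sup>2)"
    by (simp add: power2_eq_square)
  have "(\<delta> * norm \<zeta>)\<^sup>2 = \<delta>\<^sup>2 * (norm \<zeta>)\<^sup>2" by (simp add: power_mult_distrib)
  also have "\<dots> = (\<Sum>b\<in>Basis. (\<delta> * (\<zeta> \<bullet> b))\<^sup>2)"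
    by (simp add: n sum_distrib_left power_mult_distrib)
  finally have "(\<delta> * norm \<zeta>)\<^sup>2 = (\<Sum>b\<in>Basis. (\<delta> * (\<zeta> \<bullet> b))\<^sup>2)" .
  then have "- (\<delta> * norm \<zeta>)\<^sup>2 / 2 = (\<Sum>b\<in>Basis. - (\<delta> * (\<zeta> \<bullet> b))\<^sup>2 / 2)"
    by (simp add: sum_divide_distrib sum_negf)
  then show ?thesis
    unfolding gk_def by (simp add: exp_sum)
qed

lemma gauss_ft_n:
  assumes "\<delta> > 0"
  shows "(\<integral>\<zeta>. cis (- (z \<bullet> \<zeta>)) * complex_of_real (gk \<delta> \<zeta>) \<partial>(lborel::'b::euclidean_space measure))
        = complex_of_real (hk \<delta> z)"
proof -
  have eq: "cis (- (z \<bullet> \<zeta>)) * complex_of_real (gk \<delta> \<zeta>)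
      = (\<Prod>b\<in>Basis. cis (- ((z \<bullet> b) * (\<zeta> \<bullet> b))) * complex_of_real (exp (- (\<delta> * (\<zeta> \<bullet> b))\<^sup>2 / 2)))" for \<zeta> :: 'b
  proof -
    have "z \<bullet> \<zeta> = (\<Sum>b\<in>Basis. (z \<bullet> b) * (\<zeta> \<bullet> b))" by (rule euclidean_inner)
    then have "cis (- (z \<bullet> \<zeta>)) = (\<Prod>b\<in>Basis. cis (- ((z \<bullet> b) * (\<zeta> \<bullet> b))))"
      by (simp add: sum_negf[symmetric] cis_sum)
    then show ?thesis
      by (simp add: gk_prod prod.distrib)
  qed
  have "(\<integral>\<zeta>. cis (- (z \<bullet> \<zeta>)) * complex_of_real (gk \<delta> \<zeta>) \<partial>(lborel::'b measure))
     = (\<integral>\<zeta>. (\<Prod>b\<in>Basis. (\<lambda>b s. cis (- ((z \<bullet> b) * s)) * complex_of_real (exp (- (\<delta> * s)\<^sup>2 / 2))) b (\<zeta> \<bullet> b)) \<partial>(lborel::'b measure))"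
    by (simp add: eq)
  also have "\<dots> = (\<Prod>b\<in>Basis. \<integral>s. cis (- ((z \<bullet> b) * s)) * complex_of_real (exp (- (\<delta> * s)\<^sup>2 / 2)) \<partial>lborel)"
  proof (rule integral_lborel_prod_basis)
    fix b :: 'b
    show "integrable lborel (\<lambda>s. cis (- ((z \<bullet> b) * s)) * complex_of_real (exp (- (\<delta> * s)\<^sup>2 / 2)))"
    proof (rule Bochner_Integration.integrable_bound)
      show "integrable lborel (\<lambda>s. exp (- (\<delta> * s)\<^sup>2 / 2))"
        using assms by (intro gauss_integrable_scaled) simp
      show "(\<lambda>s. cis (- ((z \<bullet> b) * s)) * complex_of_real (exp (- (\<delta> * s)\<^sup>2 / 2))) \<in> borel_measurable lborel"
        by measurable
      show "AE s in lborel. norm (cis (- ((z \<bullet> b) * s)) * complex_of_real (exp (- (\<delta> * s)\<^sup>2 / 2))) \<le> norm (exp (- (\<delta> * s)\<^sup>2 / 2))"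
        by (simp add: norm_mult)
    qed
  qed
  also have "\<dots> = (\<Prod>b\<in>Basis. complex_of_real (sqrt (2*pi) / \<delta> * exp (- ((z \<bullet> b) / \<delta>)\<^sup>2 / 2)))"
    by (intro prod.cong refl gauss_ft_scaled[OF assms])
  also have "\<dots> = complex_of_real (hk \<delta> z)"
    by (simp add: hk_def)
  finally show ?thesis .
qed

lemma hk_nonneg: "\<delta> > 0 \<Longrightarrow> hk \<delta> z \<ge> 0"
  unfolding hk_def by (intro prod_nonneg) simp

lemma hk_neg: "hk \<delta> (- z) = hk \<delta> z"
  unfolding hk_def by (simp add: inner_minus_left power2_eq_square)

lemma hk_measurable[measurable]: "hk \<delta> \<in> borel_measurable borel"
  unfolding hk_def by measurable

lemma hk_nn_integral:
  assumes "\<delta> > 0"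
  shows "(\<integral>\<^sup>+ z. ennreal (hk \<delta> z) \<partial>(lborel::'b::euclidean_space measure)) = ennreal ((2*pi) ^ DIM('b))"
proof -
  have "(\<integral>\<^sup>+ z. ennreal (hk \<delta> z) \<partial>(lborel::'b measure))
      = (\<integral>\<^sup>+ z. (\<Prod>b\<in>Basis. (\<lambda>b t. ennreal (sqrt (2*pi) / \<delta> * exp (- (t / \<delta>)\<^sup>2 / 2))) b (z \<bullet> b)) \<partial>(lborel::'b measure))"
    unfolding hk_def using assms by (subst prod_ennreal[symmetric]) auto
  also have "\<dots> = (\<Prod>b\<in>(Basis::'b set). \<integral>\<^sup>+ t. ennreal (sqrt (2*pi) / \<delta> * exp (- (t / \<delta>)\<^sup>2 / 2)) \<partial>lborel)"
    by (rule nn_integral_lborel_prod) auto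
  also have "(\<integral>\<^sup>+ t. ennreal (sqrt (2*pi) / \<delta> * exp (- (t / \<delta>)\<^sup>2 / 2)) \<partial>lborel) = ennreal (2*pi)"
  proof -
    have "(\<integral>\<^sup>+ t. ennreal (sqrt (2*pi) / \<delta> * exp (- (t / \<delta>)\<^sup>2 / 2)) \<partial>lborel)
        = ennreal (sqrt (2*pi) / \<delta>) * (\<integral>\<^sup>+ t. ennreal (exp (- (t / \<delta>)\<^sup>2 / 2)) \<partial>lborel)"
      using assms by (subst nn_integral_cmult[symmetric]) (auto intro!: nn_integral_cong simp: ennreal_mult[symmetric])
    also have "\<dots> = ennreal (2 * pi)"
      using assms by (subst gauss_nn[OF assms], subst ennreal_mult[symmetric]) auto
    finally show ?thesis .
  qed
  finally show ?thesis
    by (simp add: ennreal_power)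
qed


lemma integrable_mult_pair:
  fixes F :: "'b::euclidean_space \<Rightarrow> complex" and G :: "'d::euclidean_space \<Rightarrow> complex"
  assumes F: "integrable lborel F" and G: "integrable lborel G"
  shows "integrable (lborel \<Otimes>\<^sub>M lborel) (\<lambda>z. F (fst z) * G (snd z))"
proof (subst integrable_iff_bounded, intro conjI)
  have [measurable]: "F \<in> borel_measurable borel" "G \<in> borel_measurable borel"
    using F G by auto
  show "(\<lambda>z. F (fst z) * G (snd z)) \<in> borel_measurable (lborel \<Otimes>\<^sub>M lborel)"
    by measurable
  have m: "(\<lambda>z. ennreal (norm (F (fst z))) * ennreal (norm (G (snd z)))) \<in> borel_measurable (lborel \<Otimes>\<^sub>M lborel)"
    by measurable
  have "(\<integral>\<^sup>+ z. ennreal (norm (F (fst z) * G (snd z))) \<partial>(lborel \<Otimes>\<^sub>M lborel))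
      = (\<integral>\<^sup>+ z. ennreal (norm (F (fst z))) * ennreal (norm (G (snd z))) \<partial>(lborel \<Otimes>\<^sub>M lborel))"
    by (auto simp: norm_mult ennreal_mult intro!: nn_integral_cong)
  also have "\<dots> = (\<integral>\<^sup>+ x. \<integral>\<^sup>+ y. ennreal (norm (F x)) * ennreal (norm (G y)) \<partial>lborel \<partial>lborel)"
    using lborel.nn_integral_fst[OF m] by simp
  also have "\<dots> = (\<integral>\<^sup>+ x. ennreal (norm (F x)) * (\<integral>\<^sup>+ y. ennreal (norm (G y)) \<partial>lborel) \<partial>lborel)"
    by (simp add: nn_integral_cmult)
  also have "\<dots> = (\<integral>\<^sup>+ x. ennreal (norm (F x)) \<partial>lborel) * (\<integral>\<^sup>+ y. ennreal (norm (G y)) \<partial>lborel)"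
    by (simp add: nn_integral_multc)
  also have "\<dots> < \<infinity>"
    using F G by (simp add: integrable_iff_bounded ennreal_mult_less_top)
  finally show "(\<integral>\<^sup>+ z. ennreal (norm (F (fst z) * G (snd z))) \<partial>(lborel \<Otimes>\<^sub>M lborel)) < \<infinity>" .
qed

lemma integral_mult_pair:
  fixes F :: "'b::euclidean_space \<Rightarrow> complex" and G :: "'d::euclidean_space \<Rightarrow> complex"
  assumes F: "integrable lborel F" and G: "integrable lborel G"
  shows "(\<integral>z. F (fst z) * G (snd z) \<partial>(lborel \<Otimes>\<^sub>M lborel)) = integral\<^sup>L lborel F * integral\<^sup>L lborel G"
proof -
  have "(\<integral>z. F (fst z) * G (snd z) \<partial>(lborel \<Otimes>\<^sub>M lborel)) = (\<integral>x. \<integral>y. F x * G y \<partial>lborel \<partial>lborel)"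
    using lborel_pair.integral_fst'[OF integrable_mult_pair[OF F G]] by simp
  also have "\<dots> = integral\<^sup>L lborel F * integral\<^sup>L lborel G"
    by simp
  finally show ?thesis .
qed

definition FT :: "('b::euclidean_space \<Rightarrow> complex) \<Rightarrow> 'b \<Rightarrow> complex" where
  "FT u \<zeta> = (\<integral>x. cis (- (x \<bullet> \<zeta>)) * u x \<partial>lborel)"

lemma FT_bound:
  assumes "integrable lborel u"
  shows "norm (FT u \<zeta>) \<le> (\<integral>x. norm (u x) \<partial>lborel)"
  unfolding FT_def
  using integral_norm_bound[of lborel "\<lambda>x. cis (- (x \<bullet> \<zeta>)) * u x"] by (simp add: norm_mult)

lemma FT_measurable:
  fixes u :: "'b::euclidean_space \<Rightarrow> complex"
  assumes "integrable lborel u"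
  shows "FT u \<in> borel_measurable borel"
proof -
  have [measurable]: "u \<in> borel_measurable borel" using assms by auto
  have "(\<lambda>\<zeta>. \<integral>x. cis (- (x \<bullet> \<zeta>)) * u x \<partial>lborel) \<in> borel_measurable (borel::'b measure)"
    by measurable
  then show ?thesis unfolding FT_def[abs_def] .
qed

lemma FT_integrable_inner:
  assumes "integrable lborel u"
  shows "integrable lborel (\<lambda>x. cis (- (x \<bullet> \<zeta>)) * u x)"
proof (rule Bochner_Integration.integrable_bound[OF assms])
  have [measurable]: "u \<in> borel_measurable borel" using assms by auto
  show "(\<lambda>x. cis (- (x \<bullet> \<zeta>)) * u x) \<in> borel_measurable lborel" by measurable
qed (simp add: norm_mult)

lemma gk_nonneg: "gk \<delta> \<zeta> \<ge> 0" unfolding gk_def by simp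
lemma gk_le1: "gk \<delta> \<zeta> \<le> 1" unfolding gk_def by simp
lemma gk_measurable[measurable]: "gk \<delta> \<in> borel_measurable borel" unfolding gk_def by measurable

lemma gk_integrable:
  assumes "\<delta> > 0"
  shows "integrable lborel (gk \<delta> :: 'b::euclidean_space \<Rightarrow> real)"
proof (subst integrable_iff_bounded, intro conjI)
  show "gk \<delta> \<in> borel_measurable lborel" by simp
  have "(\<integral>\<^sup>+ z. ennreal (norm (gk \<delta> z)) \<partial>(lborel::'b measure))
     = (\<integral>\<^sup>+ z. (\<Prod>b\<in>Basis. (\<lambda>b t. ennreal (exp (- (t / (1/\<delta>))\<^sup>2 / 2))) b (z \<bullet> b)) \<partial>(lborel::'b measure))"
  proof (intro nn_integral_cong)
    fix z :: 'b
    have "ennreal (norm (gk \<delta> z)) = ennreal (\<Prod>b\<in>Basis. exp (- ((z \<bullet> b) / (1/\<delta>))\<^sup>2 / 2))"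
      using assms by (simp add: gk_prod gk_nonneg mult.commute abs_prod)
    then show "ennreal (norm (gk \<delta> z)) = (\<Prod>b\<in>Basis. (\<lambda>b t. ennreal (exp (- (t / (1/\<delta>))\<^sup>2 / 2))) b (z \<bullet> b))"
      by (simp add: prod_ennreal)
  qed
  also have "\<dots> = (\<Prod>b\<in>(Basis::'b set). \<integral>\<^sup>+ t. ennreal (exp (- (t / (1/\<delta>))\<^sup>2 / 2)) \<partial>lborel)"
    by (rule nn_integral_lborel_prod) auto
  also have "\<dots> = (\<Prod>b\<in>(Basis::'b set). ennreal (sqrt (2*pi) * (1/\<delta>)))"
    using assms by (subst gauss_nn) auto
  also have "\<dots> < \<infinity>"
    using assms by (subst prod_ennreal) (auto simp del: prod_constant)
  finally show "(\<integral>\<^sup>+ z. ennreal (norm (gk \<delta> z)) \<partial>(lborel::'b measure)) < \<infinity>" .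
qed


lemma measurable_cnj'[measurable (raw)]:
  "f \<in> borel_measurable M \<Longrightarrow> (\<lambda>x. cnj (f x)) \<in> borel_measurable M"
  by (rule borel_measurable_continuous_on[where f=cnj]) (intro continuous_intros)

lemma ab_le: "0 \<le> a \<Longrightarrow> 0 \<le> b \<Longrightarrow> a * b \<le> a\<^sup>2 + (b::real)\<^sup>2"
proof -
  assume a: "0 \<le> a" and b: "0 \<le> b"
  have "0 \<le> (a - b)\<^sup>2" by simp
  moreover have "(a - b)\<^sup>2 = a\<^sup>2 - 2*a*b + b\<^sup>2" by (simp add: power2_diff)
  moreover have "0 \<le> a * b" using a b by simp
  ultimately show ?thesis by linarith
qed

lemma norm_integral_le_nn:
  fixes f :: "'x \<Rightarrow> 'y::{banach, second_countable_topology}"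
  shows "ennreal (norm (integral\<^sup>L M f)) \<le> (\<integral>\<^sup>+ x. ennreal (norm (f x)) \<partial>M)"
proof (cases "integrable M f")
  case True then show ?thesis by (rule integral_norm_bound_ennreal)
next
  case False then show ?thesis by (simp add: not_integrable_integral_eq)
qed

lemma nn_integral_translate:
  fixes f :: "'b::euclidean_space \<Rightarrow> ennreal"
  assumes [measurable]: "f \<in> borel_measurable borel"
  shows "(\<integral>\<^sup>+ y. f (c + y) \<partial>lborel) = (\<integral>\<^sup>+ y. f y \<partial>lborel)"
proof -
  have "(\<integral>\<^sup>+ y. f y \<partial>lborel) = (\<integral>\<^sup>+ y. f y \<partial>(distr lborel borel ((+) c)))"
    by (simp add: lborel_distr_plus)
  also have "\<dots> = (\<integral>\<^sup>+ y. f (c + y) \<partial>lborel)"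
    by (subst nn_integral_distr) auto
  finally show ?thesis ..
qed

lemma hk_translate1:
  assumes "\<delta> > 0"
  shows "(\<integral>\<^sup>+ y. ennreal (hk \<delta> (x - y)) \<partial>(lborel::'b::euclidean_space measure)) = ennreal ((2*pi) ^ DIM('b))"
proof -
  have "(\<lambda>y. ennreal (hk \<delta> (x - y))) = (\<lambda>y. ennreal (hk \<delta> (- x + y)))"
    using hk_neg[of \<delta> "- x + y" for y] by (auto simp: fun_eq_iff)
  then show ?thesis
    using nn_integral_translate[of "\<lambda>z. ennreal (hk \<delta> z)" "- x"] hk_nn_integral[OF assms] by simp
qed

lemma hk_translate2:
  assumes "\<delta> > 0"
  shows "(\<integral>\<^sup>+ x. ennreal (hk \<delta> (x - y)) \<partial>(lborel::'b::euclidean_space measure)) = ennreal ((2*pi) ^ DIM('b))"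
  using nn_integral_translate[of "\<lambda>z. ennreal (hk \<delta> z)" "- y"] hk_nn_integral[OF assms] by simp

lemma integrable_mult_pair':
  fixes F :: "'b::euclidean_space \<Rightarrow> complex" and G :: "'d::euclidean_space \<Rightarrow> complex"
  assumes F: "integrable lborel F" and G: "integrable lborel G"
  shows "integrable lborel (\<lambda>z. F (fst z) * G (snd z))"
  using integrable_mult_pair[OF F G] by (simp add: lborel_prod)

lemma integral_mult_pair':
  fixes F :: "'b::euclidean_space \<Rightarrow> complex" and G :: "'d::euclidean_space \<Rightarrow> complex"
  assumes F: "integrable lborel F" and G: "integrable lborel G"
  shows "(\<integral>z. F (fst z) * G (snd z) \<partial>lborel) = integral\<^sup>L lborel F * integral\<^sup>L lborel G"
  using integral_mult_pair[OF F G] by (simp add: lborel_prod)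

lemma planch_delta:
  fixes u :: "'b::euclidean_space \<Rightarrow> complex"
  assumes u: "integrable lborel u" and u2: "integrable lborel (\<lambda>x. (cmod (u x))\<^sup>2)" and \<delta>: "\<delta> > 0"
  shows "(\<integral>\<^sup>+ \<zeta>. ennreal ((cmod (FT u \<zeta>))\<^sup>2 * gk \<delta> \<zeta>) \<partial>lborel)
         \<le> ennreal (2 * (2*pi)^DIM('b)) * (\<integral>\<^sup>+ x. ennreal ((cmod (u x))\<^sup>2) \<partial>lborel)"
proof -
  have [measurable]: "u \<in> borel_measurable borel" using u by auto
  have [measurable]: "FT u \<in> borel_measurable borel" using FT_measurable[OF u] .
  define A where "A = (\<integral>x. norm (u x) \<partial>lborel)"
  define K where "K = ((2*pi)^DIM('b) :: real)"
  define \<Phi> where "\<Phi> = (\<lambda>(p::'b\<times>'b) (\<zeta>::'b). u (fst p) * cnj (u (snd p)) * (cis (- ((fst p - snd p) \<bullet> \<zeta>)) * complex_of_real (gk \<delta> \<zeta>)))"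
  have ucnj: "integrable lborel (\<lambda>p::'b\<times>'b. u (fst p) * cnj (u (snd p)))"
    using integrable_mult_pair'[OF u integrable_cnj[OF u]] .
  have gkc: "integrable lborel (\<lambda>\<zeta>::'b. complex_of_real (gk \<delta> \<zeta>))"
    using integrable_of_real[OF gk_integrable[OF \<delta>]] by simp
  have int_dom: "integrable (lborel \<Otimes>\<^sub>M lborel) (\<lambda>z. (\<lambda>p::'b\<times>'b. u (fst p) * cnj (u (snd p))) (fst z) * (\<lambda>\<zeta>::'b. complex_of_real (gk \<delta> \<zeta>)) (snd z))"
    by (rule integrable_mult_pair[OF ucnj gkc])
  have int\<Phi>: "integrable (lborel \<Otimes>\<^sub>M lborel) (case_prod \<Phi>)"
  proof (rule Bochner_Integration.integrable_bound[OF int_dom])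
    have "(\<lambda>z. u (fst (fst z)) * cnj (u (snd (fst z))) * (cis (- ((fst (fst z) - snd (fst z)) \<bullet> snd z)) * complex_of_real (gk \<delta> (snd z))))
       \<in> borel_measurable ((lborel \<Otimes>\<^sub>M lborel) \<Otimes>\<^sub>M (lborel::'b measure))"
      by measurable
    then show "case_prod \<Phi> \<in> borel_measurable (lborel \<Otimes>\<^sub>M lborel)"
      unfolding \<Phi>_def by (simp add: lborel_prod case_prod_beta')
    show "AE z in lborel \<Otimes>\<^sub>M lborel. norm (case_prod \<Phi> z) \<le> norm (u (fst (fst z)) * cnj (u (snd (fst z))) * complex_of_real (gk \<delta> (snd z)))"
      by (auto simp: \<Phi>_def norm_mult split: prod.splits)
  qed
  have pt: "(\<integral>p. \<Phi> p \<zeta> \<partial>lborel) = complex_of_real ((cmod (FT u \<zeta>))\<^sup>2 * gk \<delta> \<zeta>)" for \<zeta>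
  proof -
    define F where "F = (\<lambda>x. cis (- (x \<bullet> \<zeta>)) * u x)"
    have F: "integrable lborel F" unfolding F_def by (rule FT_integrable_inner[OF u])
    have c: "cis (- ((x - y) \<bullet> \<zeta>)) = cis (- (x \<bullet> \<zeta>)) * cnj (cis (- (y \<bullet> \<zeta>)))" for x y :: 'b
      by (subst cis_cnj, subst cis_mult) (simp add: inner_diff_left)
    have "\<Phi> p \<zeta> = F (fst p) * (\<lambda>y. cnj (F y)) (snd p) * complex_of_real (gk \<delta> \<zeta>)" for p
      unfolding \<Phi>_def F_def by (simp add: c mult_ac)
    then have "(\<integral>p. \<Phi> p \<zeta> \<partial>lborel) = (\<integral>p. F (fst p) * (\<lambda>y. cnj (F y)) (snd p) \<partial>lborel) * complex_of_real (gk \<delta> \<zeta>)"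
      by simp
    also have "\<dots> = integral\<^sup>L lborel F * cnj (integral\<^sup>L lborel F) * complex_of_real (gk \<delta> \<zeta>)"
      by (subst integral_mult_pair'[OF F integrable_cnj[OF F]]) simp
    also have "\<dots> = complex_of_real ((cmod (FT u \<zeta>))\<^sup>2 * gk \<delta> \<zeta>)"
    proof -
      have sq: "z * cnj z = (complex_of_real (cmod z))\<^sup>2" for z
        by (metis complex_norm_square of_real_power)
      show ?thesis by (simp add: F_def FT_def[symmetric] sq)
    qed
    finally show ?thesis .
  qed
  have inner: "(\<integral>\<zeta>. \<Phi> p \<zeta> \<partial>lborel) = u (fst p) * cnj (u (snd p)) * complex_of_real (hk \<delta> (fst p - snd p))" for p
    unfolding \<Phi>_def by (simp add: gauss_ft_n[OF \<delta>])
  have m1: "(\<lambda>p::'b\<times>'b. ennreal ((cmod (u (fst p)))\<^sup>2 * hk \<delta> (fst p - snd p))) \<in> borel_measurable (lborel \<Otimes>\<^sub>M lborel)"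
    by measurable
  have m2: "(\<lambda>p::'b\<times>'b. ennreal ((cmod (u (snd p)))\<^sup>2 * hk \<delta> (fst p - snd p))) \<in> borel_measurable (lborel \<Otimes>\<^sub>M lborel)"
    by measurable
  have mu: "(\<lambda>x. ennreal ((cmod (u x))\<^sup>2)) \<in> borel_measurable lborel" by measurable
  define I where "I = (\<integral>\<zeta>. (cmod (FT u \<zeta>))\<^sup>2 * gk \<delta> \<zeta> \<partial>lborel)"
  have "complex_of_real I = (\<integral>\<zeta>. \<integral>p. \<Phi> p \<zeta> \<partial>lborel \<partial>lborel)"
    unfolding I_def pt by (simp only: integral_complex_of_real)
  also have "\<dots> = (\<integral>p. \<integral>\<zeta>. \<Phi> p \<zeta> \<partial>lborel \<partial>lborel)"
    by (rule lborel_pair.Fubini_integral[OF int\<Phi>])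
  also have "\<dots> = (\<integral>p. u (fst p) * cnj (u (snd p)) * complex_of_real (hk \<delta> (fst p - snd p)) \<partial>lborel)"
    by (simp add: inner)
  finally have Ieq: "complex_of_real I = (\<integral>p. u (fst p) * cnj (u (snd p)) * complex_of_real (hk \<delta> (fst p - snd p)) \<partial>lborel)" .
  have "ennreal I \<le> ennreal (norm (complex_of_real I))"
    by (intro ennreal_leI) simp
  also have "\<dots> \<le> (\<integral>\<^sup>+ p. ennreal (norm (u (fst p) * cnj (u (snd p)) * complex_of_real (hk \<delta> (fst p - snd p)))) \<partial>lborel)"
    unfolding Ieq by (rule norm_integral_le_nn)
  also have "\<dots> \<le> (\<integral>\<^sup>+ p. ennreal ((cmod (u (fst p)))\<^sup>2 * hk \<delta> (fst p - snd p)) + ennreal ((cmod (u (snd p)))\<^sup>2 * hk \<delta> (fst p - snd p)) \<partial>lborel)"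
  proof (intro nn_integral_mono)
    fix p :: "'b \<times> 'b"
    have h: "hk \<delta> (fst p - snd p) \<ge> 0" using hk_nonneg[OF \<delta>] .
    have "cmod (u (fst p)) * cmod (u (snd p)) \<le> (cmod (u (fst p)))\<^sup>2 + (cmod (u (snd p)))\<^sup>2"
      by (rule ab_le) auto
    then have "cmod (u (fst p)) * cmod (u (snd p)) * hk \<delta> (fst p - snd p) \<le> (cmod (u (fst p)))\<^sup>2 * hk \<delta> (fst p - snd p) + (cmod (u (snd p)))\<^sup>2 * hk \<delta> (fst p - snd p)"
      using h by (metis distrib_right mult_right_mono)
    then show "ennreal (norm (u (fst p) * cnj (u (snd p)) * complex_of_real (hk \<delta> (fst p - snd p)))) \<le> ennreal ((cmod (u (fst p)))\<^sup>2 * hk \<delta> (fst p - snd p)) + ennreal ((cmod (u (snd p)))\<^sup>2 * hk \<delta> (fst p - snd p))"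
      using h by (simp add: norm_mult ennreal_plus[symmetric] del: ennreal_plus)
  qed
  also have "\<dots> = (\<integral>\<^sup>+ p. ennreal ((cmod (u (fst p)))\<^sup>2 * hk \<delta> (fst p - snd p)) \<partial>lborel) + (\<integral>\<^sup>+ p. ennreal ((cmod (u (snd p)))\<^sup>2 * hk \<delta> (fst p - snd p)) \<partial>lborel)"
    using m1 m2 by (intro nn_integral_add) (auto simp: lborel_prod)
  also have "(\<integral>\<^sup>+ p. ennreal ((cmod (u (fst p)))\<^sup>2 * hk \<delta> (fst p - snd p)) \<partial>lborel) = ennreal K * (\<integral>\<^sup>+ x. ennreal ((cmod (u x))\<^sup>2) \<partial>lborel)"
  proof -
    note m = m1
    have "(\<integral>\<^sup>+ p. ennreal ((cmod (u (fst p)))\<^sup>2 * hk \<delta> (fst p - snd p)) \<partial>lborel)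
        = (\<integral>\<^sup>+ x. \<integral>\<^sup>+ y. ennreal ((cmod (u x))\<^sup>2) * ennreal (hk \<delta> (x - y)) \<partial>lborel \<partial>lborel)"
      using lborel.nn_integral_fst[OF m] hk_nonneg[OF \<delta>] by (simp add: lborel_prod ennreal_mult')
    also have "\<dots> = (\<integral>\<^sup>+ x. ennreal ((cmod (u x))\<^sup>2) * ennreal K \<partial>lborel)"
      by (simp add: nn_integral_cmult hk_translate1[OF \<delta>] K_def)
    also have "\<dots> = ennreal K * (\<integral>\<^sup>+ x. ennreal ((cmod (u x))\<^sup>2) \<partial>lborel)"
      using nn_integral_cmult[OF mu, of "ennreal K"] by (simp add: mult.commute)
    finally show ?thesis .
  qed
  also have "(\<integral>\<^sup>+ p. ennreal ((cmod (u (snd p)))\<^sup>2 * hk \<delta> (fst p - snd p)) \<partial>lborel) = ennreal K * (\<integral>\<^sup>+ x. ennreal ((cmod (u x))\<^sup>2) \<partial>lborel)"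
  proof -
    note m = m2
    have "(\<integral>\<^sup>+ p. ennreal ((cmod (u (snd p)))\<^sup>2 * hk \<delta> (fst p - snd p)) \<partial>lborel)
        = (\<integral>\<^sup>+ y. \<integral>\<^sup>+ x. ennreal ((cmod (u y))\<^sup>2) * ennreal (hk \<delta> (x - y)) \<partial>lborel \<partial>lborel)"
      using lborel_pair.nn_integral_snd[OF m] hk_nonneg[OF \<delta>] by (simp add: lborel_prod ennreal_mult')
    also have "\<dots> = (\<integral>\<^sup>+ y. ennreal ((cmod (u y))\<^sup>2) * ennreal K \<partial>lborel)"
      by (simp add: nn_integral_cmult hk_translate2[OF \<delta>] K_def)
    also have "\<dots> = ennreal K * (\<integral>\<^sup>+ x. ennreal ((cmod (u x))\<^sup>2) \<partial>lborel)"
      using nn_integral_cmult[OF mu, of "ennreal K"] by (simp add: mult.commute)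
    finally show ?thesis .
  qed
  also have "ennreal K * (\<integral>\<^sup>+ x. ennreal ((cmod (u x))\<^sup>2) \<partial>lborel) + ennreal K * (\<integral>\<^sup>+ x. ennreal ((cmod (u x))\<^sup>2) \<partial>lborel)
      = ennreal (2 * K) * (\<integral>\<^sup>+ x. ennreal ((cmod (u x))\<^sup>2) \<partial>lborel)"
  proof -
    have "ennreal (2 * K) = 2 * ennreal K" unfolding K_def by (simp add: ennreal_mult)
    then show ?thesis by (simp only: distrib_right mult_2)
  qed
  finally have Ile: "ennreal I \<le> ennreal (2 * K) * (\<integral>\<^sup>+ x. ennreal ((cmod (u x))\<^sup>2) \<partial>lborel)" .
  have intI: "integrable lborel (\<lambda>\<zeta>. (cmod (FT u \<zeta>))\<^sup>2 * gk \<delta> \<zeta>)"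
  proof (rule Bochner_Integration.integrable_bound)
    show "integrable lborel (\<lambda>\<zeta>::'b. A\<^sup>2 * gk \<delta> \<zeta>)"
      using gk_integrable[OF \<delta>, where 'b='b] by simp
    show "(\<lambda>\<zeta>. (cmod (FT u \<zeta>))\<^sup>2 * gk \<delta> \<zeta>) \<in> borel_measurable lborel" by measurable
    show "AE \<zeta> in lborel. norm ((cmod (FT u \<zeta>))\<^sup>2 * gk \<delta> \<zeta>) \<le> norm (A\<^sup>2 * gk \<delta> \<zeta>)"
    proof (intro AE_I2)
      fix \<zeta>
      have "cmod (FT u \<zeta>) \<le> A" unfolding A_def by (rule FT_bound[OF u])
      then have "(cmod (FT u \<zeta>))\<^sup>2 \<le> A\<^sup>2" by (intro power_mono) auto
      then show "norm ((cmod (FT u \<zeta>))\<^sup>2 * gk \<delta> \<zeta>) \<le> norm (A\<^sup>2 * gk \<delta> \<zeta>)"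
        using gk_nonneg[of \<delta> \<zeta>] by (simp add: abs_mult mult_right_mono)
    qed
  qed
  have "(\<integral>\<^sup>+ \<zeta>. ennreal ((cmod (FT u \<zeta>))\<^sup>2 * gk \<delta> \<zeta>) \<partial>lborel) = ennreal I"
    unfolding I_def using intI by (subst nn_integral_eq_integral) (auto simp: gk_nonneg)
  with Ile show ?thesis by (simp add: K_def)
qed


lemma plancherel_le:
  fixes u :: "'b::euclidean_space \<Rightarrow> complex"
  assumes u: "integrable lborel u" and u2: "integrable lborel (\<lambda>x. (cmod (u x))\<^sup>2)"
  shows "(\<integral>\<^sup>+ \<zeta>. ennreal ((cmod (FT u \<zeta>))\<^sup>2) \<partial>lborel)
         \<le> ennreal (2 * (2*pi)^DIM('b)) * (\<integral>\<^sup>+ x. ennreal ((cmod (u x))\<^sup>2) \<partial>lborel)"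
    (is "_ \<le> ?B")
proof -
  have [measurable]: "FT u \<in> borel_measurable borel" using FT_measurable[OF u] .
  define f where "f = (\<lambda>n \<zeta>. ennreal ((cmod (FT u \<zeta>))\<^sup>2 * gk (inverse (real (Suc n))) \<zeta>))"
  have fm: "f n \<in> borel_measurable lborel" for n unfolding f_def by measurable
  have lim: "(\<lambda>n. f n \<zeta>) \<longlonglongrightarrow> ennreal ((cmod (FT u \<zeta>))\<^sup>2)" for \<zeta> :: 'b
  proof -
    have "(\<lambda>n. gk (inverse (real (Suc n))) \<zeta>) \<longlonglongrightarrow> exp (- (0 * norm \<zeta>)\<^sup>2 / 2)"
      unfolding gk_def by (intro tendsto_intros LIMSEQ_inverse_real_of_nat) auto
    then have "(\<lambda>n. (cmod (FT u \<zeta>))\<^sup>2 * gk (inverse (real (Suc n))) \<zeta>) \<longlonglongrightarrow> (cmod (FT u \<zeta>))\<^sup>2 * 1"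
      by (intro tendsto_mult_left) simp
    then show ?thesis unfolding f_def by (intro tendsto_ennrealI) simp
  qed
  have "(\<integral>\<^sup>+ \<zeta>. ennreal ((cmod (FT u \<zeta>))\<^sup>2) \<partial>lborel) = (\<integral>\<^sup>+ \<zeta>. liminf (\<lambda>n. f n \<zeta>) \<partial>lborel)"
    by (intro nn_integral_cong) (simp add: lim_imp_Liminf[OF _ lim])
  also have "\<dots> \<le> liminf (\<lambda>n. integral\<^sup>N lborel (f n))"
    by (intro nn_integral_liminf fm)
  also have "\<dots> \<le> limsup (\<lambda>n. integral\<^sup>N lborel (f n))"
    by (intro Liminf_le_Limsup) simp
  also have "\<dots> \<le> ?B"
    unfolding f_def by (intro Limsup_bounded always_eventually allI planch_delta u u2) simp
  finally show ?thesis .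
qed

lemma fourier_eq_FT: "fourier u = FT u"
proof (rule ext)
  fix z :: "'a::euclidean_space \<times> real"
  obtain \<xi> k where z: "z = (\<xi>, k)" by (cases z)
  show "fourier u z = FT u z"
    unfolding z fourier_def FT_def
    by (auto intro!: Bochner_Integration.integral_cong simp: inner_Pair split: prod.splits)
qed

lemma fourier_mult_exp: "fourier (mult_exp \<eta> l u) z = FT u (z - (\<eta>, l))"
proof -
  have "fourier (mult_exp \<eta> l u) z = FT (mult_exp \<eta> l u) z" by (simp add: fourier_eq_FT)
  also have "\<dots> = FT u (z - (\<eta>, l))"
    unfolding FT_def
  proof (intro Bochner_Integration.integral_cong refl)
    fix x :: "'a \<times> real"
    obtain y \<omega> where x: "x = (y, \<omega>)" by (cases x)
    have "cis (- (x \<bullet> z)) * mult_exp \<eta> l u x = cis (- (x \<bullet> z)) * cis (x \<bullet> (\<eta>, l)) * u x"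
      by (simp add: x mult_exp_def inner_Pair)
    also have "\<dots> = cis (- (x \<bullet> (z - (\<eta>, l)))) * u x"
      by (simp add: cis_mult inner_diff_right)
    finally show "cis (- (x \<bullet> z)) * mult_exp \<eta> l u x = cis (- (x \<bullet> (z - (\<eta>, l)))) * u x" .
  qed
  finally show ?thesis .
qed

lemma sq3: "(a + b + c)\<^sup>2 \<le> 3 * (a\<^sup>2 + b\<^sup>2 + (c::real)\<^sup>2)"
proof -
  have "0 \<le> (a - b)\<^sup>2 + (b - c)\<^sup>2 + (a - c)\<^sup>2" by simp
  moreover have "3 * (a\<^sup>2 + b\<^sup>2 + c\<^sup>2) - (a + b + c)\<^sup>2 = (a - b)\<^sup>2 + (b - c)\<^sup>2 + (a - c)\<^sup>2"
    by algebra
  ultimately show ?thesis by linarith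
qed

lemma max3_powr: "0 \<le> A \<Longrightarrow> 0 \<le> P \<Longrightarrow> 0 \<le> Q \<Longrightarrow> max A (max P Q) powr r \<le> A powr r + P powr r + (Q::real) powr r"
  by (cases "A \<le> max P Q"; cases "P \<le> Q") (auto simp: max_def)

lemma key_ineq:
  fixes X e v :: "'a::real_normed_vector" and \<gamma> r :: real
  assumes r: "r \<ge> 0"
  shows "((norm (X + e + v))\<^sup>2 + \<gamma>\<^sup>2) powr r
         \<le> 9 powr r * (((norm X)\<^sup>2 + \<gamma>\<^sup>2) powr r + (1 + (norm e)\<^sup>2) powr r + (1 + (norm v)\<^sup>2) powr r)"
proof -
  define A where "A = (norm X)\<^sup>2 + \<gamma>\<^sup>2"
  define P where "P = 1 + (norm e)\<^sup>2"
  define Q where "Q = 1 + (norm v)\<^sup>2"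
  define M where "M = max A (max P Q)"
  have A0: "0 \<le> A" and P0: "0 \<le> P" and Q0: "0 \<le> Q" unfolding A_def P_def Q_def by auto
  have "norm (X + e + v) \<le> norm X + norm e + norm v"
    by (metis add_right_mono norm_triangle_ineq order_trans)
  then have "(norm (X + e + v))\<^sup>2 \<le> (norm X + norm e + norm v)\<^sup>2"
    by (intro power_mono) auto
  also have "\<dots> \<le> 3 * ((norm X)\<^sup>2 + (norm e)\<^sup>2 + (norm v)\<^sup>2)" by (rule sq3)
  finally have "(norm (X + e + v))\<^sup>2 + \<gamma>\<^sup>2 \<le> 3 * A + 3 * P + 3 * Q"
    using zero_le_power2[of \<gamma>] unfolding A_def P_def Q_def by (simp only: ring_distribs)
  also have "\<dots> \<le> 9 * M" unfolding M_def by auto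
  finally have L: "(norm (X + e + v))\<^sup>2 + \<gamma>\<^sup>2 \<le> 9 * M" .
  have "((norm (X + e + v))\<^sup>2 + \<gamma>\<^sup>2) powr r \<le> (9 * M) powr r"
    by (intro powr_mono2 r L) simp
  also have "\<dots> = 9 powr r * M powr r"
    using A0 P0 Q0 unfolding M_def by (subst powr_mult) auto
  also have "\<dots> \<le> 9 powr r * (A powr r + P powr r + Q powr r)"
    unfolding M_def by (intro mult_left_mono max3_powr A0 P0 Q0) simp
  finally show ?thesis unfolding A_def P_def Q_def .
qed

lemma powr_half_sq: "0 \<le> a \<Longrightarrow> (a powr (r / 2))\<^sup>2 = a powr (r::real)"
  by (simp add: power2_eq_square powr_add[symmetric])

lemma sqrt_powr_sq: "0 \<le> a \<Longrightarrow> (sqrt a powr r)\<^sup>2 = a powr (r::real)"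
  by (simp add: powr_half_sqrt[symmetric] powr_powr powr_half_sq)

lemma integral_translate:
  fixes f :: "'b::euclidean_space \<Rightarrow> real"
  assumes [measurable]: "f \<in> borel_measurable borel"
  shows "integrable lborel (\<lambda>y. f (c + y)) \<longleftrightarrow> integrable lborel f"
    and "(\<integral>y. f (c + y) \<partial>lborel) = (\<integral>y. f y \<partial>lborel)"
proof -
  have "integrable (distr lborel borel ((+) c)) f \<longleftrightarrow> integrable lborel (\<lambda>y. f (c + y))"
    by (intro integrable_distr_eq) auto
  then show "integrable lborel (\<lambda>y. f (c + y)) \<longleftrightarrow> integrable lborel f"
    by (simp add: lborel_distr_plus)
  have "integral\<^sup>L (distr lborel borel ((+) c)) f = (\<integral>y. f (c + y) \<partial>lborel)"
    by (intro integral_distr) auto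
  then show "(\<integral>y. f (c + y) \<partial>lborel) = (\<integral>y. f y \<partial>lborel)"
    by (simp add: lborel_distr_plus)
qed

lemma lam_symbol_measurable[measurable]: "lam_symbol (\<beta>::'a::euclidean_space) \<epsilon> \<gamma> r \<in> borel_measurable borel"
proof -
  have "(\<lambda>z::'a\<times>real. ((norm (fst z + (snd z / \<epsilon>) *\<^sub>R \<beta>))\<^sup>2 + \<gamma>\<^sup>2) powr (r / 2)) \<in> borel_measurable (borel \<Otimes>\<^sub>M borel)"
    by measurable
  then show ?thesis
    unfolding lam_symbol_def by (simp add: borel_prod case_prod_beta')
qed

lemma final_arith:
  fixes a b c t m B :: real
  assumes "0 \<le> a" "0 \<le> b" "0 \<le> c" "0 \<le> t" "1 \<le> m" "t \<le> m" "1 \<le> B"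
  shows "a + t * b + B * t * c \<le> B * m * (a + b + c)"
proof -
  have "1 \<le> B * m" using assms by (metis mult_mono' order.trans mult_1_left zero_le_one)
  then have 1: "a \<le> B * m * a" using assms by (metis mult_le_cancel_right1 mult.commute order_less_le order.refl mult_right_mono mult_1_left)
  have "m \<le> B * m" using mult_right_mono[of 1 B m] assms by simp
  then have "t \<le> B * m" using assms by linarith
  then have 2: "t * b \<le> B * m * b" using assms by (intro mult_right_mono) auto
  have "B * t \<le> B * m" using assms by (intro mult_left_mono) auto
  then have 3: "B * t * c \<le> B * m * c" using assms by (intro mult_right_mono) auto
  from 1 2 3 show ?thesis by (simp add: algebra_simps)
qed

lemma sq_sum_ge: "0 \<le> a \<Longrightarrow> 0 \<le> b \<Longrightarrow> 0 \<le> c \<Longrightarrow> a\<^sup>2 + b\<^sup>2 + c\<^sup>2 \<le> (a + b + (c::real))\<^sup>2"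
  by (simp add: power2_eq_square algebra_simps)

theorem lemman40:
  fixes \<beta> :: "'a::euclidean_space" and r :: real
  assumes "\<beta> \<noteq> 0" and "r \<ge> 0"
  shows "\<exists>C>0. \<forall>\<epsilon> \<gamma> (\<eta>::'a) (l::real) (u :: 'a \<times> real \<Rightarrow> complex).
           0 < \<epsilon> \<and> \<epsilon> \<le> 1 \<and> 1 \<le> \<gamma>
           \<and> integrable lborel u
           \<and> integrable lborel (\<lambda>z. (cmod (u z))\<^sup>2)
           \<and> integrable lborel (lam_integrand \<beta> \<epsilon> \<gamma> r u)
           \<longrightarrow> integrable lborel (lam_integrand \<beta> \<epsilon> \<gamma> r (mult_exp \<eta> l u))
             \<and> lam_norm \<beta> \<epsilon> \<gamma> r (mult_exp \<eta> l u)
                 \<le> C * (lam_norm \<beta> \<epsilon> \<gamma> r u + jbr (norm \<eta>) powr r * L2_norm0 u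
                        + jbr (l / \<epsilon>) powr r * L2_norm0 u)"
proof -
  have r: "r \<ge> 0" by fact
  define B where "B = max 1 (norm \<beta>)"
  define B2r where "B2r = (B\<^sup>2) powr r"
  define c0 where "c0 = (2 * pi) powr (- (real DIM('a) + 1) / 2)"
  define P where "P = 2 * (2*pi) ^ DIM('a \<times> real)"
  define m where "m = max 1 (c0\<^sup>2 * P)"
  define C where "C = sqrt (9 powr r * B2r * m)"
  have B1: "1 \<le> B" unfolding B_def by simp
  have B2r1: "1 \<le> B2r" unfolding B2r_def using B1 r
    by (metis ge_one_powr_ge_zero one_le_power)
  have m1: "1 \<le> m" unfolding m_def by simp
  have P0: "0 \<le> P" unfolding P_def by simp
  have c00: "0 \<le> c0" unfolding c0_def by simp
  have Cpos: "C > 0" unfolding C_def using B2r1 m1 by (intro real_sqrt_gt_zero mult_pos_pos) auto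
  show ?thesis
  proof (intro exI[of _ C] conjI allI impI Cpos)
    fix \<epsilon> \<gamma> :: real and \<eta> :: 'a and l :: real and u :: "'a \<times> real \<Rightarrow> complex"
    assume H: "0 < \<epsilon> \<and> \<epsilon> \<le> 1 \<and> 1 \<le> \<gamma> \<and> integrable lborel u \<and> integrable lborel (\<lambda>z. (cmod (u z))\<^sup>2)
           \<and> integrable lborel (lam_integrand \<beta> \<epsilon> \<gamma> r u)"
    then have \<epsilon>: "0 < \<epsilon>" and \<gamma>: "1 \<le> \<gamma>" and u: "integrable lborel u"
      and u2: "integrable lborel (\<lambda>z. (cmod (u z))\<^sup>2)" and uI: "integrable lborel (lam_integrand \<beta> \<epsilon> \<gamma> r u)"
      by auto
    define s where "s = (\<eta>, l)"
    define S where "S = lam_symbol \<beta> \<epsilon> \<gamma> r"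
    define J1 where "J1 = jbr (norm \<eta>) powr r"
    define J2 where "J2 = jbr (l / \<epsilon>) powr r"
    define Jc where "Jc = J1\<^sup>2 + B2r * J2\<^sup>2"
    define F2 where "F2 = (\<lambda>w. (cmod (FT u w))\<^sup>2)"
    define U where "U = (\<integral>x. (cmod (u x))\<^sup>2 \<partial>lborel)"
    define Iu where "Iu = integral\<^sup>L lborel (lam_integrand \<beta> \<epsilon> \<gamma> r u)"
    have [measurable]: "FT u \<in> borel_measurable borel" using FT_measurable[OF u] .
    have [measurable]: "S \<in> borel_measurable borel" unfolding S_def by measurable
    have Jc0: "0 \<le> Jc" unfolding Jc_def using B2r1 by simp
    have U0: "0 \<le> U" unfolding U_def by simp
    have Iu0: "0 \<le> Iu" unfolding Iu_def lam_integrand_def by simp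
    have lamu: "lam_integrand \<beta> \<epsilon> \<gamma> r u = (\<lambda>z. (S z * cmod (FT u z))\<^sup>2)"
      by (simp add: lam_integrand_def fourier_eq_FT S_def)
    have lamm: "lam_integrand \<beta> \<epsilon> \<gamma> r (mult_exp \<eta> l u) = (\<lambda>z. (S z * cmod (FT u (z - s)))\<^sup>2)"
      by (simp add: lam_integrand_def fourier_mult_exp S_def s_def)
    have nnU: "(\<integral>\<^sup>+ x. ennreal ((cmod (u x))\<^sup>2) \<partial>lborel) = ennreal U"
      unfolding U_def using u2 by (subst nn_integral_eq_integral) auto
    have pl: "(\<integral>\<^sup>+ w. ennreal (F2 w) \<partial>lborel) \<le> ennreal (P * U)"
      using plancherel_le[OF u u2] unfolding nnU F2_def P_def using U0 by (simp add: ennreal_mult)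
    have F2int: "integrable lborel F2"
    proof (subst integrable_iff_bounded, intro conjI)
      show "F2 \<in> borel_measurable lborel" unfolding F2_def by measurable
      have "(\<integral>\<^sup>+ w. ennreal (norm (F2 w)) \<partial>lborel) = (\<integral>\<^sup>+ w. ennreal (F2 w) \<partial>lborel)"
        unfolding F2_def by simp
      also have "\<dots> < \<infinity>" using pl by (simp add: le_less_trans)
      finally show "(\<integral>\<^sup>+ w. ennreal (norm (F2 w)) \<partial>lborel) < \<infinity>" .
    qed
    have F2le: "integral\<^sup>L lborel F2 \<le> P * U"
    proof -
      have "ennreal (integral\<^sup>L lborel F2) = (\<integral>\<^sup>+ w. ennreal (F2 w) \<partial>lborel)"
        using F2int by (subst nn_integral_eq_integral) (auto simp: F2_def)
      with pl have "ennreal (integral\<^sup>L lborel F2) \<le> ennreal (P * U)" by simp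
      then show ?thesis using P0 U0 by (simp add: ennreal_le_iff)
    qed
    have pw: "(S (s + w) * cmod (FT u w))\<^sup>2 \<le> 9 powr r * ((S w * cmod (FT u w))\<^sup>2 + Jc * F2 w)" for w
    proof -
      obtain \<xi> k where w: "w = (\<xi>, k)" by (cases w)
      define X where "X = \<xi> + (k / \<epsilon>) *\<^sub>R \<beta>"
      define v where "v = (l / \<epsilon>) *\<^sub>R \<beta>"
      have Ssw: "S (s + w) = ((norm (X + \<eta> + v))\<^sup>2 + \<gamma>\<^sup>2) powr (r / 2)"
        unfolding S_def lam_symbol_def s_def w X_def v_def
        by (simp add: add_divide_distrib scaleR_add_left algebra_simps)
      have Sw: "S w = ((norm X)\<^sup>2 + \<gamma>\<^sup>2) powr (r / 2)"
        unfolding S_def lam_symbol_def w X_def by simp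
      have Ssw2: "(S (s + w))\<^sup>2 = ((norm (X + \<eta> + v))\<^sup>2 + \<gamma>\<^sup>2) powr r"
        unfolding Ssw by (rule powr_half_sq) simp
      have Sw2: "(S w)\<^sup>2 = ((norm X)\<^sup>2 + \<gamma>\<^sup>2) powr r"
        unfolding Sw by (rule powr_half_sq) simp
      have J12: "J1\<^sup>2 = (1 + (norm \<eta>)\<^sup>2) powr r"
        unfolding J1_def jbr_def by (rule sqrt_powr_sq) simp
      have J22: "J2\<^sup>2 = (1 + (l / \<epsilon>)\<^sup>2) powr r"
        unfolding J2_def jbr_def by (rule sqrt_powr_sq) simp
      have "norm v = \<bar>l / \<epsilon>\<bar> * norm \<beta>" unfolding v_def by simp
      also have "\<dots> \<le> \<bar>l / \<epsilon>\<bar> * B" unfolding B_def by (intro mult_left_mono) auto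
      finally have nv: "norm v \<le> \<bar>l / \<epsilon>\<bar> * B" .
      have "(norm v)\<^sup>2 \<le> (\<bar>l / \<epsilon>\<bar> * B)\<^sup>2" using nv by (intro power_mono) auto
      also have "\<dots> = (l / \<epsilon>)\<^sup>2 * B\<^sup>2" by (simp only: power_mult_distrib power2_abs)
      finally have nv2: "(norm v)\<^sup>2 \<le> (l / \<epsilon>)\<^sup>2 * B\<^sup>2" .
      have B21: "1 \<le> B\<^sup>2" using B1 by (simp add: one_le_power)
      have "B\<^sup>2 * (1 + (l / \<epsilon>)\<^sup>2) = B\<^sup>2 + (l / \<epsilon>)\<^sup>2 * B\<^sup>2" by (simp add: algebra_simps)
      then have "1 + (norm v)\<^sup>2 \<le> B\<^sup>2 * (1 + (l / \<epsilon>)\<^sup>2)"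
        using nv2 B21 by linarith
      then have "(1 + (norm v)\<^sup>2) powr r \<le> (B\<^sup>2 * (1 + (l / \<epsilon>)\<^sup>2)) powr r"
        by (intro powr_mono2 r) auto
      also have "\<dots> = B2r * J2\<^sup>2" unfolding B2r_def J22 by (subst powr_mult) auto
      finally have vb: "(1 + (norm v)\<^sup>2) powr r \<le> B2r * J2\<^sup>2" .
      have "(S (s + w))\<^sup>2 \<le> 9 powr r * ((S w)\<^sup>2 + J1\<^sup>2 + (1 + (norm v)\<^sup>2) powr r)"
        unfolding Ssw2 Sw2 J12 by (rule key_ineq[OF r])
      also have "\<dots> \<le> 9 powr r * ((S w)\<^sup>2 + Jc)"
        unfolding Jc_def using vb by (intro mult_left_mono) auto
      finally have S2: "(S (s + w))\<^sup>2 \<le> 9 powr r * ((S w)\<^sup>2 + Jc)" .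
      have "(S (s + w) * cmod (FT u w))\<^sup>2 = (S (s + w))\<^sup>2 * F2 w"
        unfolding F2_def by (simp add: power_mult_distrib)
      also have "\<dots> \<le> 9 powr r * ((S w)\<^sup>2 + Jc) * F2 w"
        using S2 unfolding F2_def by (intro mult_right_mono) auto
      also have "\<dots> = 9 powr r * ((S w * cmod (FT u w))\<^sup>2 + Jc * F2 w)"
        unfolding F2_def by (simp add: power_mult_distrib algebra_simps)
      finally show ?thesis .
    qed
    have g_eq: "(\<lambda>w. lam_integrand \<beta> \<epsilon> \<gamma> r (mult_exp \<eta> l u) (s + w)) = (\<lambda>w. (S (s + w) * cmod (FT u w))\<^sup>2)"
      by (simp add: lamm)
    have D_int: "integrable lborel (\<lambda>w. 9 powr r * ((S w * cmod (FT u w))\<^sup>2 + Jc * F2 w))"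
      using uI F2int unfolding lamu by (intro integrable_mult_right integrable_add) auto
    have g_int: "integrable lborel (\<lambda>w. (S (s + w) * cmod (FT u w))\<^sup>2)"
    proof (rule Bochner_Integration.integrable_bound[OF D_int])
      show "(\<lambda>w. (S (s + w) * cmod (FT u w))\<^sup>2) \<in> borel_measurable lborel" by measurable
      show "AE w in lborel. norm ((S (s + w) * cmod (FT u w))\<^sup>2) \<le> norm (9 powr r * ((S w * cmod (FT u w))\<^sup>2 + Jc * F2 w))"
      proof (intro AE_I2)
        fix w
        have "0 \<le> Jc * F2 w" using Jc0 unfolding F2_def by simp
        then have "0 \<le> 9 powr r * ((S w * cmod (FT u w))\<^sup>2 + Jc * F2 w)" by simp
        then show "norm ((S (s + w) * cmod (FT u w))\<^sup>2) \<le> norm (9 powr r * ((S w * cmod (FT u w))\<^sup>2 + Jc * F2 w))"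
          using pw[of w] by simp
      qed
    qed
    have meas_lm: "lam_integrand \<beta> \<epsilon> \<gamma> r (mult_exp \<eta> l u) \<in> borel_measurable borel"
      unfolding lamm by measurable
    have int_m: "integrable lborel (lam_integrand \<beta> \<epsilon> \<gamma> r (mult_exp \<eta> l u))"
      using integral_translate(1)[OF meas_lm, of s] g_eq g_int by simp
    have "integral\<^sup>L lborel (lam_integrand \<beta> \<epsilon> \<gamma> r (mult_exp \<eta> l u)) = (\<integral>w. (S (s + w) * cmod (FT u w))\<^sup>2 \<partial>lborel)"
      using integral_translate(2)[OF meas_lm, of s] g_eq by simp
    also have "\<dots> \<le> (\<integral>w. 9 powr r * ((S w * cmod (FT u w))\<^sup>2 + Jc * F2 w) \<partial>lborel)"
      by (intro integral_mono g_int D_int pw)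
    also have "\<dots> = 9 powr r * (Iu + Jc * integral\<^sup>L lborel F2)"
      using uI F2int unfolding Iu_def lamu by (simp add: integral_add)
    also have "\<dots> \<le> 9 powr r * (Iu + Jc * (P * U))"
      using F2le Jc0 by (intro mult_left_mono add_left_mono) auto
    finally have Im: "integral\<^sup>L lborel (lam_integrand \<beta> \<epsilon> \<gamma> r (mult_exp \<eta> l u)) \<le> 9 powr r * (Iu + Jc * (P * U))" .
    define Im where "Im = integral\<^sup>L lborel (lam_integrand \<beta> \<epsilon> \<gamma> r (mult_exp \<eta> l u))"
    have Im0: "0 \<le> Im" unfolding Im_def lam_integrand_def by simp
    have LHS: "lam_norm \<beta> \<epsilon> \<gamma> r (mult_exp \<eta> l u) = c0 * sqrt Im"
      unfolding lam_norm_def Im_def c0_def by simp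
    have RHS: "lam_norm \<beta> \<epsilon> \<gamma> r u + jbr (norm \<eta>) powr r * L2_norm0 u + jbr (l / \<epsilon>) powr r * L2_norm0 u
        = c0 * sqrt Iu + J1 * sqrt U + J2 * sqrt U"
      unfolding lam_norm_def Iu_def c0_def J1_def J2_def L2_norm0_def U_def by simp
    have J10: "0 \<le> J1" and J20: "0 \<le> J2" unfolding J1_def J2_def by simp_all
    have "(c0 * sqrt Im)\<^sup>2 = c0\<^sup>2 * Im" using Im0 by (simp add: power_mult_distrib)
    also have "\<dots> \<le> c0\<^sup>2 * (9 powr r * (Iu + Jc * (P * U)))"
      using Im unfolding Im_def by (intro mult_left_mono) auto
    also have "\<dots> = 9 powr r * (c0\<^sup>2 * Iu + (c0\<^sup>2 * P) * (J1\<^sup>2 * U) + B2r * (c0\<^sup>2 * P) * (J2\<^sup>2 * U))"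
      unfolding Jc_def by (simp add: algebra_simps)
    also have "\<dots> \<le> 9 powr r * (B2r * m * (c0\<^sup>2 * Iu + J1\<^sup>2 * U + J2\<^sup>2 * U))"
      using Iu0 U0 P0 m1 B2r1 by (intro mult_left_mono final_arith) (auto simp: m_def)
    also have "\<dots> = C\<^sup>2 * ((c0 * sqrt Iu)\<^sup>2 + (J1 * sqrt U)\<^sup>2 + (J2 * sqrt U)\<^sup>2)"
    proof -
      have "0 \<le> 9 powr r * B2r * m" using B2r1 m1 by (intro mult_nonneg_nonneg) auto
      then have C2: "C\<^sup>2 = 9 powr r * B2r * m" unfolding C_def by (rule real_sqrt_pow2)
      have e1: "(c0 * sqrt Iu)\<^sup>2 = c0\<^sup>2 * Iu" using Iu0 by (simp add: power_mult_distrib)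
      have e2: "(J1 * sqrt U)\<^sup>2 = J1\<^sup>2 * U" using U0 by (simp add: power_mult_distrib)
      have e3: "(J2 * sqrt U)\<^sup>2 = J2\<^sup>2 * U" using U0 by (simp add: power_mult_distrib)
      show ?thesis unfolding C2 e1 e2 e3 by (simp only: mult.assoc)
    qed
    also have "\<dots> \<le> C\<^sup>2 * (c0 * sqrt Iu + J1 * sqrt U + J2 * sqrt U)\<^sup>2"
      using c00 J10 J20 Iu0 U0 by (intro mult_left_mono sq_sum_ge) auto
    also have "\<dots> = (C * (c0 * sqrt Iu + J1 * sqrt U + J2 * sqrt U))\<^sup>2"
      by (rule power_mult_distrib[symmetric])
    finally have sq: "(c0 * sqrt Im)\<^sup>2 \<le> (C * (c0 * sqrt Iu + J1 * sqrt U + J2 * sqrt U))\<^sup>2" .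
    have fin0: "c0 * sqrt Im \<le> C * (c0 * sqrt Iu + J1 * sqrt U + J2 * sqrt U)"
    proof (rule power2_le_imp_le[OF sq])
      have "0 \<le> c0 * sqrt Iu + J1 * sqrt U + J2 * sqrt U" using c00 J10 J20 Iu0 U0 by (intro add_nonneg_nonneg mult_nonneg_nonneg) auto
      then show "0 \<le> C * (c0 * sqrt Iu + J1 * sqrt U + J2 * sqrt U)" using Cpos by simp
    qed
    have fin: "lam_norm \<beta> \<epsilon> \<gamma> r (mult_exp \<eta> l u)
                 \<le> C * (lam_norm \<beta> \<epsilon> \<gamma> r u + jbr (norm \<eta>) powr r * L2_norm0 u
                        + jbr (l / \<epsilon>) powr r * L2_norm0 u)"
      unfolding LHS RHS by (rule fin0)
    show "integrable lborel (lam_integrand \<beta> \<epsilon> \<gamma> r (mult_exp \<eta> l u))" by (rule int_m)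
    show "lam_norm \<beta> \<epsilon> \<gamma> r (mult_exp \<eta> l u)
                 \<le> C * (lam_norm \<beta> \<epsilon> \<gamma> r u + jbr (norm \<eta>) powr r * L2_norm0 u
                        + jbr (l / \<epsilon>) powr r * L2_norm0 u)" by (rule fin)
  qed
qed

end
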